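(* Fix $\eta\in(0,1/3)$. There is a constant $c>0$ depending only on $\eta$ such that the following holds. Let $N,P\ge 2$ be integers and let $\boldsymbol a\in\mathbb Z^N$, $\boldsymbol\phi_0,\boldsymbol\phi_1\in\mathbb Z^P$ be such that, with $\overline{a_{n\cdot}}=a_{n\cdot}/(2P)$, $f_{p,0}=\phi_{p,0}/(2N)$, $f_{p,1}=\phi_{p,1}/(2N)$, one has $\overline{a_{n\cdot}}\in[\eta,1-\eta]$ for all $n\in[N]$ and $f_{p,0},f_{p,1}\ge\eta$, $f_{p,0}+f_{p,1}\le 1-\eta$ for all $p\in[P]$. If exactly one of the two statements "$|\mathscr A_1(N,P;\boldsymbol a)|>|\mathscr A_2(N,P;\boldsymbol\phi_0,\boldsymbol\phi_1)|$" and "$H_1-H_2+\overline f>0$" holds, then $$H_1-H_2+\overline f\in\left(-c\left(\frac{\log N}{N}+\frac{\log P}{P}\right),\ c\left(\frac{\log N}{N}+\frac{\log P}{P}\right)\right].$$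
   Context: Let $N,P$ be positive integers. An admixed array is a pair $[\mathbf A,\mathbf X]$ of matrices $\mathbf A=(A_{nj}),\mathbf X=(X_{nj})\in\{0,1\}^{N\times 2P}$; for $p\in[P]$, columns $p$ and $P+p$ form the $p$th locus. The row local ancestry tally of row $n$ is $A_{n\cdot}=\sum_{j=1}^{2P}A_{nj}$. The ancestry-specific allele dosages of locus $p$ are $\Phi_{p,0}=\sum_{n=1}^N[(1-A_{np})X_{np}+(1-A_{n(P+p)})X_{n(P+p)}]$ and $\Phi_{p,1}=\sum_{n=1}^N[A_{np}X_{np}+A_{n(P+p)}X_{n(P+p)}]$. $\mathscr A_1(N,P;\boldsymbol a)$ is the set of admixed arrays with $A_{n\cdot}=a_{n\cdot}$ for all $n$; $\mathscr A_2(N,P;\boldsymbol\phi_0,\boldsymbol\phi_1)$ is the set of admixed arrays with $\Phi_{p,0}=\phi_{p,0}$, $\Phi_{p,1}=\phi_{p,1}$ for all $p$. $\log$ is base 2. For a probability vector $(z_1,\ldots,z_I)$, $H(z_1,\ldots,z_I)=\sum_i z_i\log(1/z_i)$ (binary Shannon entropy). Define $H_1=\frac1N\sum_{n=1}^N H(\overline{a_{n\cdot}},1-\overline{a_{n\cdot}})$, $H_2=\frac1P\sum_{p=1}^P H(f_{p,0},f_{p,1},1-f_{p,0}-f_{p,1})$, and $\overline f=\frac1P\sum_{p=1}^P(f_{p,0}+f_{p,1})$. *)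

theory Defs
  imports Complex_Main "HOL-Library.FuncSet"
begin

text \<open>Matrices in {0,1}^(N x 2P), 0-based indices: rows n < N, columns j < 2P;
  locus p < P consists of columns p and P + p.\<close>
definition bin_arrays :: "nat \<Rightarrow> nat \<Rightarrow> (nat \<times> nat \<Rightarrow> nat) set" where
  "bin_arrays N P = ({0..<N} \<times> {0..<2*P}) \<rightarrow>\<^sub>E {0, 1}"

definition row_tally :: "nat \<Rightarrow> (nat \<times> nat \<Rightarrow> nat) \<Rightarrow> nat \<Rightarrow> int" where
  "row_tally P A n = (\<Sum>j<2*P. int (A (n, j)))"

definition Phi0 :: "nat \<Rightarrow> nat \<Rightarrow> (nat \<times> nat \<Rightarrow> nat) \<Rightarrow> (nat \<times> nat \<Rightarrow> nat) \<Rightarrow> nat \<Rightarrow> int" where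
  "Phi0 N P A X p = (\<Sum>n<N. (1 - int (A (n, p))) * int (X (n, p))
                          + (1 - int (A (n, P + p))) * int (X (n, P + p)))"

definition Phi1 :: "nat \<Rightarrow> nat \<Rightarrow> (nat \<times> nat \<Rightarrow> nat) \<Rightarrow> (nat \<times> nat \<Rightarrow> nat) \<Rightarrow> nat \<Rightarrow> int" where
  "Phi1 N P A X p = (\<Sum>n<N. int (A (n, p)) * int (X (n, p))
                          + int (A (n, P + p)) * int (X (n, P + p)))"

definition admixed_arrays :: "nat \<Rightarrow> nat \<Rightarrow> ((nat \<times> nat \<Rightarrow> nat) \<times> (nat \<times> nat \<Rightarrow> nat)) set" where
  "admixed_arrays N P = bin_arrays N P \<times> bin_arrays N P"

definition scrA1 :: "nat \<Rightarrow> nat \<Rightarrow> (nat \<Rightarrow> int) \<Rightarrow> ((nat \<times> nat \<Rightarrow> nat) \<times> (nat \<times> nat \<Rightarrow> nat)) set" where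
  "scrA1 N P a = {(A, X) \<in> admixed_arrays N P. \<forall>n<N. row_tally P A n = a n}"

definition scrA2 :: "nat \<Rightarrow> nat \<Rightarrow> (nat \<Rightarrow> int) \<Rightarrow> (nat \<Rightarrow> int) \<Rightarrow> ((nat \<times> nat \<Rightarrow> nat) \<times> (nat \<times> nat \<Rightarrow> nat)) set" where
  "scrA2 N P phi0 phi1 = {(A, X) \<in> admixed_arrays N P.
      \<forall>p<P. Phi0 N P A X p = phi0 p \<and> Phi1 N P A X p = phi1 p}"

definition entropy :: "real list \<Rightarrow> real" where
  "entropy zs = sum_list (map (\<lambda>z. z * log 2 (1 / z)) zs)"

definition abar :: "nat \<Rightarrow> (nat \<Rightarrow> int) \<Rightarrow> nat \<Rightarrow> real" where
  "abar P a n = real_of_int (a n) / (2 * real P)"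

definition freq :: "nat \<Rightarrow> (nat \<Rightarrow> int) \<Rightarrow> nat \<Rightarrow> real" where
  "freq N phi p = real_of_int (phi p) / (2 * real N)"

definition H1 :: "nat \<Rightarrow> nat \<Rightarrow> (nat \<Rightarrow> int) \<Rightarrow> real" where
  "H1 N P a = (1 / real N) * (\<Sum>n<N. entropy [abar P a n, 1 - abar P a n])"

definition H2 :: "nat \<Rightarrow> nat \<Rightarrow> (nat \<Rightarrow> int) \<Rightarrow> (nat \<Rightarrow> int) \<Rightarrow> real" where
  "H2 N P phi0 phi1 = (1 / real P) *
     (\<Sum>p<P. entropy [freq N phi0 p, freq N phi1 p, 1 - freq N phi0 p - freq N phi1 p])"

definition fbar :: "nat \<Rightarrow> nat \<Rightarrow> (nat \<Rightarrow> int) \<Rightarrow> (nat \<Rightarrow> int) \<Rightarrow> real" where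
  "fbar N P phi0 phi1 = (1 / real P) * (\<Sum>p<P. freq N phi0 p + freq N phi1 p)"

end

theory Submission
  imports Defs
begin


lemma chain_up:
  fixes f :: "nat \<Rightarrow> real"
  assumes "\<And>i. i < k \<Longrightarrow> f i \<le> f (Suc i)" "j \<le> k"
  shows "f j \<le> f k"
  using assms
proof (induction k)
  case 0 then show ?case by simp
next
  case (Suc k)
  show ?case
  proof (cases "j = Suc k")
    case True then show ?thesis by simp
  next
    case False
    then have "j \<le> k" using Suc.prems by simp
    then have "f j \<le> f k" using Suc by simp
    moreover have "f k \<le> f (Suc k)" using Suc.prems by simp
    ultimately show ?thesis by simp
  qed
qed

lemma chain_down:
  fixes f :: "nat \<Rightarrow> real"
  assumes "\<And>i. k \<le> i \<Longrightarrow> i < n \<Longrightarrow> f (Suc i) \<le> f i" "k \<le> j" "j \<le> n"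
  shows "f j \<le> f k"
  using assms
proof (induction j)
  case 0 then show ?case by simp
next
  case (Suc j)
  show ?case
  proof (cases "k = Suc j")
    case True then show ?thesis by simp
  next
    case False
    then have "k \<le> j" using Suc.prems by simp
    then have "f j \<le> f k" using Suc by simp
    moreover have "f (Suc j) \<le> f j" using Suc.prems \<open>k \<le> j\<close> by simp
    ultimately show ?thesis by simp
  qed
qed

lemma binom_step: "j < n \<Longrightarrow> real (n choose Suc j) * (Suc j) = real (n choose j) * (n - j)"
proof -
  assume "j < n"
  then obtain m where m: "n = Suc m" by (cases n) auto
  have "Suc m * (m choose j) = (Suc m choose Suc j) * Suc j" by (rule Suc_times_binomial_eq)
  moreover have "(Suc m - j) * (Suc m choose j) = Suc m * (m choose j)"
    using binomial_absorb_comp[of "Suc m" j] by simp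
  ultimately have "(n choose Suc j) * Suc j = (n choose j) * (n - j)" using m by (simp add: mult.commute)
  then have "real ((n choose Suc j) * Suc j) = real ((n choose j) * (n - j))" by simp
  then show ?thesis by (simp only: of_nat_mult)
qed

lemma binom_bounds:
  fixes n k :: nat
  assumes "0 < k" "k < n"
  shows "real (n choose k) * real k ^ k * real (n - k) ^ (n - k) \<le> real n ^ n"
    and "real n ^ n \<le> real (n + 1) * (real (n choose k) * real k ^ k * real (n - k) ^ (n - k))"
proof -
  define K where "K = real k"
  define M where "M = real (n - k)"
  have KM: "K > 0" "M > 0" "real n = K + M" using assms unfolding K_def M_def by (auto simp: of_nat_diff)
  define u where "u j = real (n choose j) * K ^ j * M ^ (n - j)" for j
  have sum: "real n ^ n = (\<Sum>j\<le>n. u j)"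
  proof -
    have "real n ^ n = (K + M) ^ n" using KM by simp
    also have "\<dots> = (\<Sum>j\<le>n. u j)" unfolding u_def by (rule binomial_ring)
    finally show ?thesis .
  qed
  have nn: "\<And>j. 0 \<le> u j" unfolding u_def using KM by simp
  have "u k \<le> (\<Sum>j\<le>n. u j)" using member_le_sum[of k "{..n}" u] nn assms by simp
  then show "real (n choose k) * real k ^ k * real (n - k) ^ (n - k) \<le> real n ^ n"
    unfolding sum by (simp add: u_def K_def M_def)
  have step: "u (Suc j) * (real (Suc j) * M) = u j * (real (n - j) * K)" if jn: "j < n" for j
  proof -
    obtain d where d0: "n - j = Suc d" using jn by (cases "n - j") auto
    then have d: "n - j = Suc d" "n - Suc j = d" by auto
    have "u (Suc j) * (real (Suc j) * M) = (real (n choose Suc j) * real (Suc j)) * (K ^ Suc j * M ^ Suc d)"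
      unfolding u_def d by (simp add: algebra_simps)
    also have "\<dots> = (real (n choose j) * real (n - j)) * (K ^ Suc j * M ^ Suc d)"
      using binom_step[OF jn] by simp
    also have "\<dots> = u j * (real (n - j) * K)" unfolding u_def d by (simp add: algebra_simps)
    finally show ?thesis .
  qed
  have up: "u j \<le> u (Suc j)" if "j < k" for j
  proof -
    have pos: "0 < real (Suc j) * M" using KM by simp
    have "real (Suc j) * M \<le> real (n - j) * K"
    proof -
      have a: "real (n - j) = K + M - real j" using that assms KM by (simp add: of_nat_diff)
      have "real j + 1 \<le> K" using that K_def by simp
      then have "(real j + 1) * M \<le> K * M" using KM by (simp add: mult_right_mono)
      moreover have "K * (K + M - real j) - K * M = K * (K - real j)" by (simp add: algebra_simps)
      moreover have "K * (K - real j) \<ge> 0" using \<open>real j + 1 \<le> K\<close> KM by simp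
      moreover have "real (n - j) * K = K * M + K * (K - real j)" unfolding a by (simp add: algebra_simps)
      ultimately show ?thesis by (simp add: algebra_simps)
    qed
    then have "u j * (real (Suc j) * M) \<le> u j * (real (n - j) * K)"
      using nn by (simp add: mult_left_mono)
    also have "\<dots> = u (Suc j) * (real (Suc j) * M)" using step[of j] that assms by simp
    finally show ?thesis using pos by (rule mult_right_le_imp_le)
  qed
  have down: "u (Suc j) \<le> u j" if "k \<le> j" "j < n" for j
  proof -
    have pos: "0 < real (Suc j) * M" using KM by simp
    have "real (n - j) * K \<le> real (Suc j) * M"
    proof -
      have a: "real (n - j) = K + M - real j" using that KM by (simp add: of_nat_diff)
      have b: "K \<le> real j" using that K_def by simp
      have "(K + M - real j) * K \<le> M * K" using b KM by (simp add: mult_right_mono)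
      also have "M * K = K * M" by simp
      also have "K * M \<le> (real j + 1) * M" by (rule mult_right_mono) (use b KM in auto)
      finally show ?thesis unfolding a by (simp add: algebra_simps)
    qed
    then have "u j * (real (n - j) * K) \<le> u j * (real (Suc j) * M)"
      using nn by (simp add: mult_left_mono)
    then have "u (Suc j) * (real (Suc j) * M) \<le> u j * (real (Suc j) * M)" using step[of j] that by simp
    then show ?thesis using pos by (rule mult_right_le_imp_le)
  qed
  have le: "u j \<le> u k" if "j \<le> n" for j
  proof (cases "j \<le> k")
    case True then show ?thesis using chain_up[of k u j] up by simp
  next
    case False then show ?thesis using chain_down[of k n u j] down that by simp
  qed
  have "(\<Sum>j\<le>n. u j) \<le> (\<Sum>j\<le>n. u k)" by (rule sum_mono) (use le in simp)
  then show "real n ^ n \<le> real (n + 1) * (real (n choose k) * real k ^ k * real (n - k) ^ (n - k))"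
    unfolding sum by (simp add: u_def K_def M_def)
qed


definition En :: "nat \<Rightarrow> nat \<Rightarrow> real" where
  "En n k = real n * log 2 (real n) - real k * log 2 (real k) - real (n - k) * log 2 (real (n - k))"

lemma log_binom:
  fixes n k :: nat
  assumes "0 < k" "k < n"
  shows "log 2 (real (n choose k)) \<le> En n k"
    and "En n k \<le> log 2 (real (n + 1)) + log 2 (real (n choose k))"
proof -
  have cpos: "0 < real (n choose k)" using assms by simp
  have kp: "0 < real k" "0 < real (n - k)" "0 < real n" using assms by auto
  have L: "log 2 (real (n choose k) * real k ^ k * real (n - k) ^ (n - k))
     = log 2 (real (n choose k)) + real k * log 2 (real k) + real (n - k) * log 2 (real (n - k))"
    using cpos kp by (simp add: log_mult log_nat_power)
  have Ln: "log 2 (real n ^ n) = real n * log 2 (real n)" using kp by (simp add: log_nat_power)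
  have pos: "0 < real (n choose k) * real k ^ k * real (n - k) ^ (n - k)" using cpos kp by simp
  have "log 2 (real (n choose k) * real k ^ k * real (n - k) ^ (n - k)) \<le> log 2 (real n ^ n)"
    using binom_bounds(1)[OF assms] pos by (intro log_mono) auto
  then show "log 2 (real (n choose k)) \<le> En n k" unfolding L Ln En_def by simp
  have "log 2 (real n ^ n) \<le> log 2 (real (n + 1) * (real (n choose k) * real k ^ k * real (n - k) ^ (n - k)))"
    using binom_bounds(2)[OF assms] kp by (intro log_mono) auto
  also have "\<dots> = log 2 (real (n + 1)) + log 2 (real (n choose k) * real k ^ k * real (n - k) ^ (n - k))"
    using pos by (intro log_mult_pos) auto
  finally show "En n k \<le> log 2 (real (n + 1)) + log 2 (real (n choose k))" unfolding L Ln En_def by simp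
qed

lemma xlog: "0 < x \<Longrightarrow> 0 < y \<Longrightarrow> (x / y) * log 2 (1 / (x / y)) = (x / y) * (log 2 y - log 2 x)"
  by (simp add: log_divide)

lemma mulcancel: "(s::real) \<noteq> 0 \<Longrightarrow> s * (x / s * A) = x * A"
  by simp

lemma ent2_gen:
  fixes x y :: real
  assumes "0 < x" "0 < y"
  shows "(x + y) * entropy [x / (x + y), y / (x + y)] = (x + y) * log 2 (x + y) - x * log 2 x - y * log 2 y"
proof -
  have s: "0 < x + y" using assms by simp
  have c: "\<And>A w. (x + y) * (w / (x + y) * A) = w * A" using s by simp
  show ?thesis unfolding entropy_def
    apply (simp only: list.map sum_list.Cons sum_list.Nil xlog[OF assms(1) s] xlog[OF assms(2) s] distrib_left add_0_right c)
    by (simp add: algebra_simps)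
qed

lemma ent3_gen:
  fixes x y z :: real
  assumes "0 < x" "0 < y" "0 < z"
  shows "(x + y + z) * entropy [x / (x + y + z), y / (x + y + z), z / (x + y + z)]
     = (x + y + z) * log 2 (x + y + z) - x * log 2 x - y * log 2 y - z * log 2 z"
proof -
  have s: "0 < x + y + z" using assms by simp
  have c: "\<And>A w. (x + y + z) * (w / (x + y + z) * A) = w * A" using s by simp
  show ?thesis unfolding entropy_def
    apply (simp only: list.map sum_list.Cons sum_list.Nil xlog[OF assms(1) s] xlog[OF assms(2) s] xlog[OF assms(3) s] distrib_left add_0_right c)
    by (simp add: algebra_simps)
qed

lemma entropy2:
  fixes n k :: nat
  assumes "0 < k" "k < n"
  shows "real n * entropy [real k / real n, 1 - real k / real n] = En n k"
proof -
  have kp: "0 < real k" "0 < real (n - k)" "0 < real n" using assms by auto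
  have nn: "real n = real k + real (n - k)" using assms by (simp add: of_nat_diff)
  have e: "1 - real k / real n = real (n - k) / real n" using assms kp by (simp add: of_nat_diff field_simps)
  show ?thesis unfolding e En_def using ent2_gen[OF kp(1,2)] unfolding nn[symmetric] .
qed

lemma entropy3:
  fixes n k0 k1 :: nat
  assumes "0 < k0" "0 < k1" "k0 + k1 < n"
  shows "real n * entropy [real k0 / real n, real k1 / real n, 1 - real k0 / real n - real k1 / real n]
     = En n k0 + En (n - k0) k1"
proof -
  have kp: "0 < real k0" "0 < real k1" "0 < real (n - k0 - k1)" "0 < real n" using assms by auto
  have nn: "real n = real k0 + real k1 + real (n - k0 - k1)" using assms by (simp add: of_nat_diff)
  have e: "1 - real k0 / real n - real k1 / real n = real (n - k0 - k1) / real n"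
    using assms kp by (simp add: of_nat_diff field_simps)
  have e2: "n - k0 - k1 = n - k0 - k1" ..
  have "real n * entropy [real k0 / real n, real k1 / real n, 1 - real k0 / real n - real k1 / real n]
     = real n * log 2 (real n) - real k0 * log 2 (real k0) - real k1 * log 2 (real k1) - real (n - k0 - k1) * log 2 (real (n - k0 - k1))"
    unfolding e using ent3_gen[OF kp(1,2,3)] unfolding nn[symmetric] .
  also have "\<dots> = En n k0 + En (n - k0) k1" unfolding En_def by simp
  finally show ?thesis .
qed



lemma the_block:
  assumes "\<And>k k' x. k \<in> K \<Longrightarrow> k' \<in> K \<Longrightarrow> x \<in> B k \<Longrightarrow> x \<in> B k' \<Longrightarrow> k = k'"
    "k \<in> K" "x \<in> B k"
  shows "(THE k'. k' \<in> K \<and> x \<in> B k') = k"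
  using assms by (intro the_equality) auto

lemma card_blocks:
  fixes B :: "'k \<Rightarrow> 'a set" and Q :: "'k \<Rightarrow> ('a \<Rightarrow> 'b) \<Rightarrow> bool"
  assumes fin: "finite K" and disj: "\<And>k k' x. k \<in> K \<Longrightarrow> k' \<in> K \<Longrightarrow> x \<in> B k \<Longrightarrow> x \<in> B k' \<Longrightarrow> k = k'" and I: "I = (\<Union>k\<in>K. B k)"
  shows "card {f \<in> I \<rightarrow>\<^sub>E V. \<forall>k\<in>K. Q k (restrict f (B k))} = (\<Prod>k\<in>K. card {g \<in> B k \<rightarrow>\<^sub>E V. Q k g})"
proof -
  define F where "F f = (\<lambda>k\<in>K. restrict f (B k))" for f :: "'a \<Rightarrow> 'b"
  define G where "G h = (\<lambda>x\<in>I. h (THE k. k \<in> K \<and> x \<in> B k) x)" for h :: "'k \<Rightarrow> 'a \<Rightarrow> 'b"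
  let ?A = "{f \<in> I \<rightarrow>\<^sub>E V. \<forall>k\<in>K. Q k (restrict f (B k))}"
  let ?C = "PiE K (\<lambda>k. {g \<in> B k \<rightarrow>\<^sub>E V. Q k g})"
  have GB: "restrict (G h) (B k) = h k" if h: "h \<in> ?C" and k: "k \<in> K" for h k
  proof
    fix x
    show "restrict (G h) (B k) x = h k x"
    proof (cases "x \<in> B k")
      case True
      then have "x \<in> I" using I k by auto
      then show ?thesis using True the_block[of K B, OF disj k True] by (simp add: G_def)
    next
      case False
      have "h k \<in> B k \<rightarrow>\<^sub>E V" using h k by (auto simp: PiE_iff)
      then show ?thesis using False by (auto simp: PiE_iff extensional_def)
    qed
  qed
  have bij: "bij_betw F ?A ?C"
  proof (rule bij_betw_byWitness[where f' = G])
    show "\<forall>f\<in>?A. G (F f) = f"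
    proof
      fix f assume f: "f \<in> ?A"
      show "G (F f) = f"
      proof
        fix x
        show "G (F f) x = f x"
        proof (cases "x \<in> I")
          case True
          then obtain k where k: "k \<in> K" "x \<in> B k" using I by auto
          then show ?thesis using True the_block[of K B, OF disj k] by (simp add: G_def F_def)
        next
          case False
          then show ?thesis using f by (auto simp: G_def PiE_iff extensional_def)
        qed
      qed
    qed
    show "\<forall>h\<in>?C. F (G h) = h"
    proof
      fix h assume h: "h \<in> ?C"
      show "F (G h) = h"
      proof
        fix k
        show "F (G h) k = h k"
        proof (cases "k \<in> K")
          case True then show ?thesis using GB[OF h True] by (simp add: F_def)
        next
          case False then show ?thesis using h by (auto simp: F_def PiE_iff extensional_def)
        qed
      qed
    qed
    show "F ` ?A \<subseteq> ?C"
    proof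
      fix y assume "y \<in> F ` ?A"
      then obtain f where f: "f \<in> ?A" and y: "y = F f" by auto
      have "restrict f (B k) \<in> B k \<rightarrow>\<^sub>E V" if "k \<in> K" for k
        using f that I by (auto simp: PiE_iff)
      then show "y \<in> ?C" using f y by (auto simp: F_def PiE_iff)
    qed
    show "G ` ?C \<subseteq> ?A"
    proof
      fix y assume "y \<in> G ` ?C"
      then obtain h where h: "h \<in> ?C" and y: "y = G h" by auto
      have "G h x \<in> V" if "x \<in> I" for x
      proof -
        obtain k where k: "k \<in> K" "x \<in> B k" using I \<open>x \<in> I\<close> by auto
        then have "G h x = h k x" using that the_block[of K B, OF disj k] by (simp add: G_def)
        moreover have "h k \<in> B k \<rightarrow>\<^sub>E V" using h k by (auto simp: PiE_iff)
        ultimately show ?thesis using k by auto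
      qed
      moreover have "G h \<in> extensional I" by (simp add: G_def)
      moreover have "Q k (restrict (G h) (B k))" if "k \<in> K" for k
        using GB[OF h that] h that by (auto simp: PiE_iff)
      ultimately show "y \<in> ?A" using y by (auto simp: PiE_iff)
    qed
  qed
  have "card ?A = card ?C" using bij by (rule bij_betw_same_card)
  also have "\<dots> = (\<Prod>k\<in>K. card {g \<in> B k \<rightarrow>\<^sub>E V. Q k g})" using fin by (rule card_PiE)
  finally show ?thesis .
qed

lemma card_bin:
  assumes fin: "finite S"
  shows "card {g \<in> S \<rightarrow>\<^sub>E {0::nat, 1}. card {x \<in> S. g x = 1} = k} = card S choose k"
proof -
  let ?A = "{g \<in> S \<rightarrow>\<^sub>E {0::nat, 1}. card {x \<in> S. g x = 1} = k}"
  let ?C = "{T. T \<subseteq> S \<and> card T = k}"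
  define F where "F g = {x \<in> S. g x = (1::nat)}" for g
  define G where "G T = (\<lambda>x\<in>S. if x \<in> T then 1 else (0::nat))" for T
  have "bij_betw F ?A ?C"
  proof (rule bij_betw_byWitness[where f' = G])
    show "\<forall>g\<in>?A. G (F g) = g"
    proof
      fix g assume g: "g \<in> ?A"
      show "G (F g) = g"
      proof
        fix x show "G (F g) x = g x"
          using g by (cases "x \<in> S") (auto simp: G_def F_def PiE_iff extensional_def)
      qed
    qed
    show "\<forall>T\<in>?C. F (G T) = T" by (auto simp: F_def G_def)
    show "F ` ?A \<subseteq> ?C" by (auto simp: F_def)
    show "G ` ?C \<subseteq> ?A"
    proof
      fix y assume "y \<in> G ` ?C"
      then obtain T where T: "T \<in> ?C" and y: "y = G T" by auto
      have "{x \<in> S. G T x = 1} = T" using T by (auto simp: G_def)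
      then show "y \<in> ?A" using T y by (auto simp: G_def PiE_iff)
    qed
  qed
  then have "card ?A = card ?C" by (rule bij_betw_same_card)
  also have "\<dots> = card S choose k" using fin by (rule n_subsets)
  finally show ?thesis .
qed


lemma card_tri:
  assumes fin: "finite S" and finV: "finite V" and uv: "u \<in> V" "v \<in> V" "u \<noteq> v"
  shows "card {g \<in> S \<rightarrow>\<^sub>E V. card {x \<in> S. g x = u} = k0 \<and> card {x \<in> S. g x = v} = k1}
    = (card S choose k0) * ((card S - k0) choose k1) * (card V - 2) ^ (card S - k0 - k1)"
proof -
  let ?A = "{g \<in> S \<rightarrow>\<^sub>E V. card {x \<in> S. g x = u} = k0 \<and> card {x \<in> S. g x = v} = k1}"
  let ?W = "V - {u, v}"
  let ?C = "SIGMA T0:{T. T \<subseteq> S \<and> card T = k0}. SIGMA T1:{T. T \<subseteq> S - T0 \<and> card T = k1}. (S - T0 - T1) \<rightarrow>\<^sub>E ?W"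
  define F where "F g = ({x \<in> S. g x = u}, {x \<in> S. g x = v}, restrict g (S - {x \<in> S. g x = u} - {x \<in> S. g x = v}))" for g
  define G where "G t = (\<lambda>x\<in>S. if x \<in> fst t then u else if x \<in> fst (snd t) then v else snd (snd t) x)" for t
  have "bij_betw F ?A ?C"
  proof (rule bij_betw_byWitness[where f' = G])
    show "\<forall>g\<in>?A. G (F g) = g"
    proof
      fix g assume g: "g \<in> ?A"
      show "G (F g) = g"
      proof
        fix x show "G (F g) x = g x"
          using g by (cases "x \<in> S") (auto simp: G_def F_def PiE_iff extensional_def)
      qed
    qed
    show "\<forall>t\<in>?C. F (G t) = t"
    proof
      fix t assume t: "t \<in> ?C"
      obtain T0 T1 h where tt: "t = (T0, T1, h)" by (cases t) auto
      have T: "T0 \<subseteq> S" "T1 \<subseteq> S - T0" "h \<in> (S - T0 - T1) \<rightarrow>\<^sub>E ?W" using t tt by auto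
      have e0: "{x \<in> S. G t x = u} = T0" using T uv by (auto simp: G_def tt PiE_iff)
      have e1: "{x \<in> S. G t x = v} = T1" using T uv by (auto simp: G_def tt PiE_iff)
      have e2: "restrict (G t) (S - T0 - T1) = h"
      proof
        fix x show "restrict (G t) (S - T0 - T1) x = h x"
          using T by (cases "x \<in> S - T0 - T1") (auto simp: G_def tt PiE_iff extensional_def)
      qed
      show "F (G t) = t" unfolding F_def e0 e1 e2 by (simp add: tt)
    qed
    show "F ` ?A \<subseteq> ?C"
    proof
      fix y assume "y \<in> F ` ?A"
      then obtain g where g: "g \<in> ?A" and y: "y = F g" by auto
      show "y \<in> ?C" using g uv unfolding y F_def by (auto simp: PiE_iff)
    qed
    show "G ` ?C \<subseteq> ?A"
    proof
      fix y assume "y \<in> G ` ?C"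
      then obtain t where t: "t \<in> ?C" and y: "y = G t" by auto
      obtain T0 T1 h where tt: "t = (T0, T1, h)" by (cases t) auto
      have T: "T0 \<subseteq> S" "T1 \<subseteq> S - T0" "h \<in> (S - T0 - T1) \<rightarrow>\<^sub>E ?W" "card T0 = k0" "card T1 = k1"
        using t tt by auto
      have e0: "{x \<in> S. G t x = u} = T0" using T uv by (auto simp: G_def tt PiE_iff)
      have e1: "{x \<in> S. G t x = v} = T1" using T uv by (auto simp: G_def tt PiE_iff)
      have "G t \<in> S \<rightarrow>\<^sub>E V" using T uv by (auto simp: G_def tt PiE_iff)
      then show "y \<in> ?A" using y e0 e1 T by simp
    qed
  qed
  then have "card ?A = card ?C" by (rule bij_betw_same_card)
  also have "\<dots> = (\<Sum>T0\<in>{T. T \<subseteq> S \<and> card T = k0}. \<Sum>T1\<in>{T. T \<subseteq> S - T0 \<and> card T = k1}.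
      card ((S - T0 - T1) \<rightarrow>\<^sub>E ?W))"
    using fin finV by (simp add: card_SigmaI finite_PiE)
  also have "\<dots> = (\<Sum>T0\<in>{T. T \<subseteq> S \<and> card T = k0}. \<Sum>T1\<in>{T. T \<subseteq> S - T0 \<and> card T = k1}.
      (card V - 2) ^ (card S - k0 - k1))"
  proof (intro sum.cong refl)
    fix T0 T1 assume T0: "T0 \<in> {T. T \<subseteq> S \<and> card T = k0}" and T1: "T1 \<in> {T. T \<subseteq> S - T0 \<and> card T = k1}"
    have cW: "card ?W = card V - 2" using uv finV by (simp add: card_Diff_subset)
    have f1: "finite T0" "finite T1" using T0 T1 fin by (auto intro: finite_subset)
    have cS: "card (S - T0 - T1) = card S - k0 - k1"
      using T0 T1 fin f1 by (simp add: card_Diff_subset)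
    have "card ((S - T0 - T1) \<rightarrow>\<^sub>E ?W) = (\<Prod>i\<in>S - T0 - T1. card ?W)"
      using fin by (intro card_PiE) simp
    also have "\<dots> = (card V - 2) ^ (card S - k0 - k1)" using cW cS by simp
    finally show "card ((S - T0 - T1) \<rightarrow>\<^sub>E ?W) = (card V - 2) ^ (card S - k0 - k1)" .
  qed
  also have "\<dots> = (\<Sum>T0\<in>{T. T \<subseteq> S \<and> card T = k0}. ((card S - k0) choose k1) * (card V - 2) ^ (card S - k0 - k1))"
  proof (intro sum.cong refl)
    fix T0 assume T0: "T0 \<in> {T. T \<subseteq> S \<and> card T = k0}"
    have f1: "finite T0" using T0 fin by (auto intro: finite_subset)
    have "card {T. T \<subseteq> S - T0 \<and> card T = k1} = card (S - T0) choose k1" using fin by (intro n_subsets) simp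
    also have "card (S - T0) = card S - k0" using T0 f1 by (simp add: card_Diff_subset)
    finally show "(\<Sum>T1\<in>{T. T \<subseteq> S - T0 \<and> card T = k1}. (card V - 2) ^ (card S - k0 - k1))
       = ((card S - k0) choose k1) * (card V - 2) ^ (card S - k0 - k1)" by simp
  qed
  also have "\<dots> = (card S choose k0) * ((card S - k0) choose k1) * (card V - 2) ^ (card S - k0 - k1)"
    using n_subsets[OF fin, of k0] by simp
  finally show ?thesis .
qed



lemma sum_ind_card: "finite S \<Longrightarrow> (\<Sum>x\<in>S. if Q x then 1 else 0 :: int) = int (card {x \<in> S. Q x})"
  by (simp add: sum.If_cases Int_def)

lemma rowsum:
  fixes m :: nat
  assumes "\<And>j. j < m \<Longrightarrow> g (n, j) \<in> {0::nat, 1}"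
  shows "(\<Sum>j<m. int (g (n, j))) = int (card {x \<in> {n} \<times> {0..<m}. g x = 1})"
proof -
  have "(\<Sum>j<m. int (g (n, j))) = (\<Sum>j<m. if g (n, j) = 1 then 1 else 0)"
    using assms by (intro sum.cong) auto
  also have "\<dots> = int (card {j \<in> {..<m}. g (n, j) = 1})" using sum_ind_card[of "{..<m}" "\<lambda>j. g (n, j) = 1"] by simp
  moreover have "{x \<in> {n} \<times> {0..<m}. g x = 1} = (\<lambda>j. (n, j)) ` {j \<in> {..<m}. g (n, j) = 1}" by auto
  then have "card {x \<in> {n} \<times> {0..<m}. g x = 1} = card {j \<in> {..<m}. g (n, j) = 1}"
    by (simp add: card_image inj_on_def)
  ultimately show ?thesis by simp
qed

lemma card_bin_arrays: "card (bin_arrays N P) = 2 ^ (N * (2 * P))"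
  unfolding bin_arrays_def by (simp add: card_PiE card_cartesian_product numeral_2_eq_2)

lemma card_scrA1:
  assumes a: "\<forall>n<N. 0 \<le> a n"
  shows "card (scrA1 N P a) = 2 ^ (N * (2 * P)) * (\<Prod>n\<in>{0..<N}. (2 * P) choose nat (a n))"
proof -
  define I where "I = {0..<N} \<times> {0..<2*P}"
  define B where "B n = {n} \<times> {0..<2*P}" for n :: nat
  define Q where "Q n g = (card {x \<in> B n. g x = (1::nat)} = nat (a n))" for n g
  have e1: "scrA1 N P a = {A \<in> bin_arrays N P. \<forall>n<N. row_tally P A n = a n} \<times> bin_arrays N P"
    by (auto simp: scrA1_def admixed_arrays_def)
  have e2: "{A \<in> bin_arrays N P. \<forall>n<N. row_tally P A n = a n}
      = {f \<in> I \<rightarrow>\<^sub>E {0, 1}. \<forall>n\<in>{0..<N}. Q n (restrict f (B n))}"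
  proof -
    have "row_tally P A n = a n \<longleftrightarrow> Q n (restrict A (B n))" if A: "A \<in> I \<rightarrow>\<^sub>E {0, 1}" and n: "n < N" for A n
    proof -
      have "row_tally P A n = int (card {x \<in> B n. A x = 1})"
        unfolding row_tally_def B_def using A n by (intro rowsum) (auto simp: I_def PiE_iff)
      moreover have "{x \<in> B n. restrict A (B n) x = 1} = {x \<in> B n. A x = 1}" by auto
      ultimately show ?thesis unfolding Q_def using a n by auto
    qed
    then show ?thesis unfolding bin_arrays_def I_def[symmetric] by auto
  qed
  have "card {f \<in> I \<rightarrow>\<^sub>E {0, 1}. \<forall>n\<in>{0..<N}. Q n (restrict f (B n))}
      = (\<Prod>n\<in>{0..<N}. card {g \<in> B n \<rightarrow>\<^sub>E {0, 1}. Q n g})"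
    by (rule card_blocks) (auto simp: B_def I_def)
  also have "\<dots> = (\<Prod>n\<in>{0..<N}. (2 * P) choose nat (a n))"
  proof (rule prod.cong[OF refl])
    fix n
    have "card {g \<in> B n \<rightarrow>\<^sub>E {0, 1}. Q n g} = card (B n) choose nat (a n)"
      unfolding Q_def by (rule card_bin) (simp add: B_def)
    also have "card (B n) = 2 * P" by (simp add: B_def card_cartesian_product)
    finally show "card {g \<in> B n \<rightarrow>\<^sub>E {0, 1}. Q n g} = (2 * P) choose nat (a n)" .
  qed
  finally show ?thesis unfolding e1 e2 card_cartesian_product card_bin_arrays by simp
qed


lemma locus_sum:
  fixes t :: "nat \<times> nat \<Rightarrow> int"
  assumes "0 < P"
  shows "(\<Sum>n<N. t (n, p) + t (n, P + p)) = (\<Sum>x\<in>{0..<N} \<times> {p, P + p}. t x)"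
proof -
  have "(\<Sum>x\<in>{0..<N} \<times> {p, P + p}. t x) = (\<Sum>n\<in>{0..<N}. \<Sum>j\<in>{p, P + p}. t (n, j))"
    by (simp add: sum.cartesian_product)
  also have "\<dots> = (\<Sum>n<N. t (n, p) + t (n, P + p))"
    using assms by (simp add: lessThan_atLeast0)
  finally show ?thesis by simp
qed

lemma Phi_card:
  assumes A: "A \<in> bin_arrays N P" and X: "X \<in> bin_arrays N P" and p: "p < P"
  shows "Phi0 N P A X p = int (card {x \<in> {0..<N} \<times> {p, P + p}. (A x, X x) = (0, 1)})"
    and "Phi1 N P A X p = int (card {x \<in> {0..<N} \<times> {p, P + p}. (A x, X x) = (1, 1)})"
proof -
  let ?C = "{0..<N} \<times> {p, P + p}"
  have P0: "0 < P" using p by simp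
  have bin: "A x \<in> {0, 1} \<and> X x \<in> {0, 1}" if "x \<in> ?C" for x
  proof -
    have xi: "x \<in> {0..<N} \<times> {0..<2*P}" using that p by auto
    have a1: "A \<in> {0..<N} \<times> {0..<2*P} \<rightarrow> {0, 1}" and x1: "X \<in> {0..<N} \<times> {0..<2*P} \<rightarrow> {0, 1}"
      using A X unfolding bin_arrays_def by (auto simp: PiE_def)
    have "A x \<in> {0, 1}" by (rule funcset_mem[OF a1 xi])
    moreover have "X x \<in> {0, 1}" by (rule funcset_mem[OF x1 xi])
    ultimately show ?thesis by blast
  qed
  have "Phi0 N P A X p = (\<Sum>x\<in>?C. (1 - int (A x)) * int (X x))"
    unfolding Phi0_def using locus_sum[OF P0, where t = "\<lambda>x. (1 - int (A x)) * int (X x)" and N = N and p = p] by simp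
  also have "\<dots> = (\<Sum>x\<in>?C. if (A x, X x) = (0, 1) then 1 else 0)"
  proof (rule sum.cong[OF refl])
    fix x assume "x \<in> ?C"
    from bin[OF this] have b: "A x = 0 \<or> A x = 1" "X x = 0 \<or> X x = 1" by auto
    then show "(1 - int (A x)) * int (X x) = (if (A x, X x) = (0, 1) then 1 else 0)" by (elim disjE) auto
  qed
  also have "\<dots> = int (card {x \<in> ?C. (A x, X x) = (0, 1)})" by (rule sum_ind_card) simp
  finally show "Phi0 N P A X p = int (card {x \<in> ?C. (A x, X x) = (0, 1)})" .
  have "Phi1 N P A X p = (\<Sum>x\<in>?C. int (A x) * int (X x))"
    unfolding Phi1_def using locus_sum[OF P0, where t = "\<lambda>x. int (A x) * int (X x)" and N = N and p = p] by simp
  also have "\<dots> = (\<Sum>x\<in>?C. if (A x, X x) = (1, 1) then 1 else 0)"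
  proof (rule sum.cong[OF refl])
    fix x assume "x \<in> ?C"
    from bin[OF this] have b: "A x = 0 \<or> A x = 1" "X x = 0 \<or> X x = 1" by auto
    then show "int (A x) * int (X x) = (if (A x, X x) = (1, 1) then 1 else 0)" by (elim disjE) auto
  qed
  also have "\<dots> = int (card {x \<in> ?C. (A x, X x) = (1, 1)})" by (rule sum_ind_card) simp
  finally show "Phi1 N P A X p = int (card {x \<in> ?C. (A x, X x) = (1, 1)})" .
qed

lemma bin_mem: "A \<in> bin_arrays N P \<Longrightarrow> x \<in> {0..<N} \<times> {0..<2*P} \<Longrightarrow> A x \<in> {0, 1}"
  unfolding bin_arrays_def by (rule PiE_mem)

lemma bin_intro:
  assumes "\<And>x. x \<in> {0..<N} \<times> {0..<2*P} \<Longrightarrow> A x \<in> {0, 1}"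
    and "\<And>x. x \<notin> {0..<N} \<times> {0..<2*P} \<Longrightarrow> A x = undefined"
  shows "A \<in> bin_arrays N P"
  unfolding bin_arrays_def PiE_iff extensional_def mem_Collect_eq
proof (intro conjI ballI allI impI)
  fix x assume "x \<in> {0..<N} \<times> {0..<2*P}" then show "A x \<in> {0, 1}" by (rule assms(1))
next
  fix x assume "x \<notin> {0..<N} \<times> {0..<2*P}" then show "A x = undefined" by (rule assms(2))
qed

lemma card_scrA2:
  assumes P0: "0 < P" and ph: "\<forall>p<P. 0 \<le> phi0 p \<and> 0 \<le> phi1 p"
  shows "card (scrA2 N P phi0 phi1) = (\<Prod>p\<in>{0..<P}. ((2 * N) choose nat (phi0 p)) *
     ((2 * N - nat (phi0 p)) choose nat (phi1 p)) * 2 ^ (2 * N - nat (phi0 p) - nat (phi1 p)))"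
proof -
  define I where "I = {0..<N} \<times> {0..<2*P}"
  define C where "C p = {0..<N} \<times> {p, P + p}" for p :: nat
  define V where "V = {0::nat, 1} \<times> {0::nat, 1}"
  define Q where "Q p g = (card {x \<in> C p. g x = ((0::nat), (1::nat))} = nat (phi0 p) \<and>
      card {x \<in> C p. g x = (1, 1)} = nat (phi1 p))" for p g
  define Phi where "Phi AX = (\<lambda>x\<in>I. (fst AX x, snd AX x))" for AX :: "(nat \<times> nat \<Rightarrow> nat) \<times> (nat \<times> nat \<Rightarrow> nat)"
  define Psi where "Psi g = ((\<lambda>x\<in>I. fst (g x)), (\<lambda>x\<in>I. snd (g x)))" for g :: "nat \<times> nat \<Rightarrow> nat \<times> nat"
  have CI: "C p \<subseteq> I" if "p < P" for p using that by (auto simp: C_def I_def)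
  have cond: "(Phi0 N P A X p = phi0 p \<and> Phi1 N P A X p = phi1 p) \<longleftrightarrow> Q p (restrict (Phi (A, X)) (C p))"
    if A: "A \<in> bin_arrays N P" and X: "X \<in> bin_arrays N P" and p: "p < P" for A X p
  proof -
    have r: "\<And>c. {x \<in> C p. restrict (Phi (A, X)) (C p) x = c} = {x \<in> C p. (A x, X x) = c}"
      using CI[OF p] by (auto simp: Phi_def)
    show ?thesis unfolding Q_def r using Phi_card[OF A X p] ph p unfolding C_def by auto
  qed
  have inj: "inj_on Phi (admixed_arrays N P)"
  proof (rule inj_onI)
    fix AX BY assume a: "AX \<in> admixed_arrays N P" "BY \<in> admixed_arrays N P" and e: "Phi AX = Phi BY"
    have "fst AX x = fst BY x \<and> snd AX x = snd BY x" for x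
    proof (cases "x \<in> I")
      case True then show ?thesis using fun_cong[OF e, of x] by (simp add: Phi_def)
    next
      case False
      have b: "fst AX \<in> bin_arrays N P" "snd AX \<in> bin_arrays N P" "fst BY \<in> bin_arrays N P" "snd BY \<in> bin_arrays N P"
        using a unfolding admixed_arrays_def by (simp_all add: mem_Times_iff)
      have ext: "fst AX \<in> extensional I" "snd AX \<in> extensional I" "fst BY \<in> extensional I" "snd BY \<in> extensional I"
        using b unfolding bin_arrays_def I_def PiE_iff by simp_all
      show ?thesis using extensional_arb[OF ext(1) False] extensional_arb[OF ext(2) False]
        extensional_arb[OF ext(3) False] extensional_arb[OF ext(4) False] by simp
    qed
    then show "AX = BY" by (simp add: prod_eq_iff fun_eq_iff)
  qed
  have img: "Phi ` scrA2 N P phi0 phi1 = {g \<in> I \<rightarrow>\<^sub>E V. \<forall>p\<in>{0..<P}. Q p (restrict g (C p))}"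
  proof
    show "Phi ` scrA2 N P phi0 phi1 \<subseteq> {g \<in> I \<rightarrow>\<^sub>E V. \<forall>p\<in>{0..<P}. Q p (restrict g (C p))}"
    proof
      fix y assume "y \<in> Phi ` scrA2 N P phi0 phi1"
      then obtain A X where AX: "(A, X) \<in> scrA2 N P phi0 phi1" and y: "y = Phi (A, X)" by auto
      have A: "A \<in> bin_arrays N P" and X: "X \<in> bin_arrays N P"
        using AX by (simp_all add: scrA2_def admixed_arrays_def)
      have AXs: "\<forall>p<P. Phi0 N P A X p = phi0 p \<and> Phi1 N P A X p = phi1 p"
        using AX by (simp add: scrA2_def)
      have "Phi (A, X) \<in> I \<rightarrow>\<^sub>E V" unfolding Phi_def restrict_PiE_iff
      proof
        fix x assume x: "x \<in> I"
        show "(fst (A, X) x, snd (A, X) x) \<in> V"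
          using bin_mem[OF A, of x] bin_mem[OF X, of x] x by (auto simp: V_def I_def)
      qed
      moreover have "Q p (restrict (Phi (A, X)) (C p))" if "p \<in> {0..<P}" for p
      proof -
        have pP: "p < P" using that by simp
        have "Phi0 N P A X p = phi0 p \<and> Phi1 N P A X p = phi1 p" using AXs pP by blast
        then show ?thesis using cond[OF A X pP] by blast
      qed
      ultimately show "y \<in> {g \<in> I \<rightarrow>\<^sub>E V. \<forall>p\<in>{0..<P}. Q p (restrict g (C p))}" using y by simp
    qed
    show "{g \<in> I \<rightarrow>\<^sub>E V. \<forall>p\<in>{0..<P}. Q p (restrict g (C p))} \<subseteq> Phi ` scrA2 N P phi0 phi1"
    proof
      fix g assume g: "g \<in> {g \<in> I \<rightarrow>\<^sub>E V. \<forall>p\<in>{0..<P}. Q p (restrict g (C p))}"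
      then have gI: "g \<in> I \<rightarrow>\<^sub>E V" and gQ: "\<forall>p\<in>{0..<P}. Q p (restrict g (C p))" by simp_all
      define A where "A = (\<lambda>x\<in>I. fst (g x))"
      define X where "X = (\<lambda>x\<in>I. snd (g x))"
      have gV: "g x \<in> V" if "x \<in> I" for x using PiE_mem[OF gI that] .
      have A: "A \<in> bin_arrays N P"
      proof (rule bin_intro)
        fix x assume x: "x \<in> {0..<N} \<times> {0..<2*P}"
        then have "g x \<in> V" using gV by (simp add: I_def)
        then have "fst (g x) \<in> {0, 1} \<and> snd (g x) \<in> {0, 1}" unfolding V_def by (simp only: mem_Times_iff)
        moreover have "A x = fst (g x)" using x by (simp add: A_def I_def)
        ultimately show "A x \<in> {0, 1}" by simp
      next
        fix x assume x: "x \<notin> {0..<N} \<times> {0..<2*P}"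
        then show "A x = undefined" by (simp add: A_def I_def)
      qed
      have X: "X \<in> bin_arrays N P"
      proof (rule bin_intro)
        fix x assume x: "x \<in> {0..<N} \<times> {0..<2*P}"
        then have "g x \<in> V" using gV by (simp add: I_def)
        then have "fst (g x) \<in> {0, 1} \<and> snd (g x) \<in> {0, 1}" unfolding V_def by (simp only: mem_Times_iff)
        moreover have "X x = snd (g x)" using x by (simp add: X_def I_def)
        ultimately show "X x \<in> {0, 1}" by simp
      next
        fix x assume x: "x \<notin> {0..<N} \<times> {0..<2*P}"
        then show "X x = undefined" by (simp add: X_def I_def)
      qed
      have PP: "Phi (A, X) = g"
      proof
        fix x show "Phi (A, X) x = g x"
        proof (cases "x \<in> I")
          case True then show ?thesis by (simp add: Phi_def A_def X_def)
        next
          case False then show ?thesis using PiE_arb[OF gI False] by (simp add: Phi_def)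
        qed
      qed
      have "\<forall>p<P. Phi0 N P A X p = phi0 p \<and> Phi1 N P A X p = phi1 p"
      proof (intro allI impI)
        fix p assume p: "p < P"
        have "Q p (restrict (Phi (A, X)) (C p))" using gQ p unfolding PP by simp
        then show "Phi0 N P A X p = phi0 p \<and> Phi1 N P A X p = phi1 p" using cond[OF A X p] by blast
      qed
      then have "(A, X) \<in> scrA2 N P phi0 phi1" using A X by (simp add: scrA2_def admixed_arrays_def)
      then show "g \<in> Phi ` scrA2 N P phi0 phi1" using PP by (metis image_eqI)
    qed
  qed
  have "card (scrA2 N P phi0 phi1) = card (Phi ` scrA2 N P phi0 phi1)"
    using inj by (intro card_image[symmetric] inj_on_subset[OF inj]) (auto simp: scrA2_def)
  also have "\<dots> = (\<Prod>p\<in>{0..<P}. card {g \<in> C p \<rightarrow>\<^sub>E V. Q p g})"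
    unfolding img
  proof (rule card_blocks)
    show "I = (\<Union>p\<in>{0..<P}. C p)"
    proof
      show "I \<subseteq> (\<Union>p\<in>{0..<P}. C p)"
      proof
        fix x assume "x \<in> I"
        then obtain n j where x: "x = (n, j)" "n < N" "j < 2 * P" by (auto simp: I_def)
        show "x \<in> (\<Union>p\<in>{0..<P}. C p)"
        proof (cases "j < P")
          case True then show ?thesis using x by (auto simp: C_def)
        next
          case False then have "x \<in> C (j - P)" using x by (auto simp: C_def)
          then show ?thesis using x False by auto
        qed
      qed
      show "(\<Union>p\<in>{0..<P}. C p) \<subseteq> I"
      proof
        fix y assume "y \<in> (\<Union>p\<in>{0..<P}. C p)"
        then obtain p where "p < P" "y \<in> C p" by auto
        then show "y \<in> I" using CI by blast
      qed
    qed
  next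
    fix k k' x assume k: "k \<in> {0..<P}" "k' \<in> {0..<P}" and x: "x \<in> C k" "x \<in> C k'"
    then show "k = k'" by (auto simp: C_def)
  qed simp
  also have "\<dots> = (\<Prod>p\<in>{0..<P}. ((2 * N) choose nat (phi0 p)) *
     ((2 * N - nat (phi0 p)) choose nat (phi1 p)) * 2 ^ (2 * N - nat (phi0 p) - nat (phi1 p)))"
  proof (rule prod.cong[OF refl])
    fix p assume p: "p \<in> {0..<P}"
    have cC: "card (C p) = 2 * N" using P0 by (simp add: C_def card_cartesian_product)
    have cV: "card V = 4" by (simp add: V_def card_cartesian_product)
    show "card {g \<in> C p \<rightarrow>\<^sub>E V. Q p g} = ((2 * N) choose nat (phi0 p)) *
     ((2 * N - nat (phi0 p)) choose nat (phi1 p)) * 2 ^ (2 * N - nat (phi0 p) - nat (phi1 p))"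
    proof -
      have "card {g \<in> C p \<rightarrow>\<^sub>E V. Q p g} = (card (C p) choose nat (phi0 p)) * ((card (C p) - nat (phi0 p)) choose nat (phi1 p))
          * (card V - 2) ^ (card (C p) - nat (phi0 p) - nat (phi1 p))"
      proof -
        have fC: "finite (C p)" by (simp add: C_def)
        have fV: "finite V" by (simp add: V_def)
        have uv: "((0::nat), (1::nat)) \<in> V" "((1::nat), (1::nat)) \<in> V" "((0::nat), (1::nat)) \<noteq> (1, 1)"
          by (simp_all add: V_def)
        show ?thesis unfolding Q_def by (rule card_tri[OF fC fV uv])
      qed
      then show ?thesis using cC cV by simp
    qed
  qed
  finally show ?thesis .
qed



lemma log_prod_pos:
  fixes f :: "'a \<Rightarrow> real"
  assumes "finite S" "\<And>i. i \<in> S \<Longrightarrow> 0 < f i"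
  shows "log b (\<Prod>i\<in>S. f i) = (\<Sum>i\<in>S. log b (f i))"
  using assms
proof (induction S rule: finite_induct)
  case empty then show ?case by simp
next
  case (insert x F)
  have "0 < f x" "0 < (\<Prod>i\<in>F. f i)" using insert.prems by (auto intro: prod_pos)
  then show ?case using insert by (simp add: log_mult_pos)
qed

lemma side1:
  fixes N P :: nat and a :: "nat \<Rightarrow> int"
  assumes ka: "\<forall>n<N. 0 < a n \<and> a n < 2 * int P"
  shows "0 < card (scrA1 N P a)"
    and "log 2 (real (card (scrA1 N P a))) \<le> 2 * real N * real P * (1 + H1 N P a)"
    and "2 * real N * real P * (1 + H1 N P a) - real N * log 2 (2 * real P + 1) \<le> log 2 (real (card (scrA1 N P a)))"
proof -
  define k where "k n = nat (a n)" for n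
  have k: "0 < k n" "k n < 2 * P" if "n < N" for n using ka that unfolding k_def by auto
  have c1: "card (scrA1 N P a) = 2 ^ (N * (2 * P)) * (\<Prod>n\<in>{0..<N}. (2 * P) choose k n)"
    unfolding k_def by (rule card_scrA1) (use ka in auto)
  have cpos: "0 < real ((2 * P) choose k n)" if "n \<in> {0..<N}" for n using k[of n] that by simp
  show "0 < card (scrA1 N P a)" unfolding c1 using cpos by (simp add: prod_pos)
  have L: "log 2 (real (card (scrA1 N P a))) = 2 * real N * real P + (\<Sum>n\<in>{0..<N}. log 2 (real ((2 * P) choose k n)))"
  proof -
    have "real (card (scrA1 N P a)) = 2 ^ (N * (2 * P)) * (\<Prod>n\<in>{0..<N}. real ((2 * P) choose k n))"
      unfolding c1 by simp
    moreover have "log 2 (2 ^ (N * (2 * P)) * (\<Prod>n\<in>{0..<N}. real ((2 * P) choose k n)))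
        = log 2 (2 ^ (N * (2 * P))) + log 2 (\<Prod>n\<in>{0..<N}. real ((2 * P) choose k n))"
      using cpos by (intro log_mult_pos) (auto intro: prod_pos)
    moreover have "log 2 ((2::real) ^ (N * (2 * P))) = 2 * real N * real P" by (simp add: log_nat_power)
    moreover have "log 2 (\<Prod>n\<in>{0..<N}. real ((2 * P) choose k n)) = (\<Sum>n\<in>{0..<N}. log 2 (real ((2 * P) choose k n)))"
      using cpos by (intro log_prod_pos) auto
    ultimately show ?thesis by simp
  qed
  have E: "(\<Sum>n\<in>{0..<N}. En (2 * P) (k n)) = 2 * real N * real P * H1 N P a"
  proof -
    have "En (2 * P) (k n) = 2 * real P * entropy [abar P a n, 1 - abar P a n]" if "n \<in> {0..<N}" for n
    proof -
      have "0 \<le> a n" using ka that by auto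
      then have "abar P a n = real (k n) / real (2 * P)" unfolding abar_def k_def by simp
      then show ?thesis using entropy2[of "k n" "2 * P"] k[of n] that by simp
    qed
    then have "(\<Sum>n\<in>{0..<N}. En (2 * P) (k n)) = (\<Sum>n\<in>{0..<N}. 2 * real P * entropy [abar P a n, 1 - abar P a n])"
      by (rule sum.cong[OF refl])
    also have "\<dots> = 2 * real P * (\<Sum>n<N. entropy [abar P a n, 1 - abar P a n])"
      by (simp add: sum_distrib_left lessThan_atLeast0)
    also have "\<dots> = 2 * real N * real P * H1 N P a"
    proof (cases "N = 0")
      case True then show ?thesis by simp
    next
      case False then show ?thesis unfolding H1_def by simp
    qed
    finally show ?thesis .
  qed
  have up: "log 2 (real ((2 * P) choose k n)) \<le> En (2 * P) (k n)" if "n \<in> {0..<N}" for n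
    using log_binom(1)[of "k n" "2 * P"] k[of n] that by simp
  have lo: "En (2 * P) (k n) - log 2 (2 * real P + 1) \<le> log 2 (real ((2 * P) choose k n))" if "n \<in> {0..<N}" for n
    using log_binom(2)[of "k n" "2 * P"] k[of n] that by (simp add: add.commute)
  have "(\<Sum>n\<in>{0..<N}. log 2 (real ((2 * P) choose k n))) \<le> (\<Sum>n\<in>{0..<N}. En (2 * P) (k n))"
    by (rule sum_mono) (rule up)
  then show "log 2 (real (card (scrA1 N P a))) \<le> 2 * real N * real P * (1 + H1 N P a)"
    unfolding L E by (simp add: algebra_simps)
  have "(\<Sum>n\<in>{0..<N}. En (2 * P) (k n) - log 2 (2 * real P + 1)) \<le> (\<Sum>n\<in>{0..<N}. log 2 (real ((2 * P) choose k n)))"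
    by (rule sum_mono) (rule lo)
  then have "(\<Sum>n\<in>{0..<N}. En (2 * P) (k n)) - real N * log 2 (2 * real P + 1) \<le> (\<Sum>n\<in>{0..<N}. log 2 (real ((2 * P) choose k n)))"
    by (simp add: sum_subtractf)
  then show "2 * real N * real P * (1 + H1 N P a) - real N * log 2 (2 * real P + 1) \<le> log 2 (real (card (scrA1 N P a)))"
    unfolding L E by (simp add: algebra_simps)
qed


lemma side2:
  fixes N P :: nat and phi0 phi1 :: "nat \<Rightarrow> int"
  assumes P0: "0 < P" and N0: "0 < N"
    and kp: "\<forall>p<P. 0 < phi0 p \<and> 0 < phi1 p \<and> phi0 p + phi1 p < 2 * int N"
  shows "0 < card (scrA2 N P phi0 phi1)"
    and "log 2 (real (card (scrA2 N P phi0 phi1))) \<le> 2 * real N * real P * (H2 N P phi0 phi1 + 1 - fbar N P phi0 phi1)"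
    and "2 * real N * real P * (H2 N P phi0 phi1 + 1 - fbar N P phi0 phi1) - 2 * real P * log 2 (2 * real N + 1)
          \<le> log 2 (real (card (scrA2 N P phi0 phi1)))"
proof -
  define k0 where "k0 p = nat (phi0 p)" for p
  define k1 where "k1 p = nat (phi1 p)" for p
  define t where "t p = ((2 * N) choose k0 p) * ((2 * N - k0 p) choose k1 p) * 2 ^ (2 * N - k0 p - k1 p)" for p
  define e where "e p = entropy [freq N phi0 p, freq N phi1 p, 1 - freq N phi0 p - freq N phi1 p]" for p
  define s where "s p = freq N phi0 p + freq N phi1 p" for p
  have k: "0 < k0 p" "0 < k1 p" "k0 p + k1 p < 2 * N" if "p < P" for p
    using kp that unfolding k0_def k1_def by auto
  have c2: "card (scrA2 N P phi0 phi1) = (\<Prod>p\<in>{0..<P}. t p)"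
    unfolding t_def k0_def k1_def by (rule card_scrA2[OF P0]) (use kp in auto)
  have c1pos: "0 < real ((2 * N) choose k0 p)" "0 < real ((2 * N - k0 p) choose k1 p)" if "p \<in> {0..<P}" for p
    using k[of p] that by simp_all
  have tpos: "0 < real (t p)" if "p \<in> {0..<P}" for p
    using c1pos[OF that] unfolding t_def by simp
  show "0 < card (scrA2 N P phi0 phi1)" unfolding c2 using tpos by (simp add: prod_pos)
  have L: "log 2 (real (card (scrA2 N P phi0 phi1))) = (\<Sum>p\<in>{0..<P}. log 2 (real (t p)))"
    unfolding c2 of_nat_prod using tpos by (intro log_prod_pos) auto
  have Lt: "log 2 (real (t p)) = log 2 (real ((2 * N) choose k0 p)) + log 2 (real ((2 * N - k0 p) choose k1 p))
      + (2 * real N - real (k0 p) - real (k1 p))" if p: "p \<in> {0..<P}" for p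
  proof -
    have "real (t p) = real ((2 * N) choose k0 p) * real ((2 * N - k0 p) choose k1 p) * 2 ^ (2 * N - k0 p - k1 p)"
      unfolding t_def by simp
    moreover have "log 2 \<dots> = log 2 (real ((2 * N) choose k0 p)) + log 2 (real ((2 * N - k0 p) choose k1 p))
        + log 2 (2 ^ (2 * N - k0 p - k1 p))"
      using c1pos[OF p] by (simp add: log_mult_pos)
    moreover have "log 2 ((2::real) ^ (2 * N - k0 p - k1 p)) = 2 * real N - real (k0 p) - real (k1 p)"
      using k[of p] p by (simp add: log_nat_power of_nat_diff)
    ultimately show ?thesis by simp
  qed
  have Ee: "En (2 * N) (k0 p) + En (2 * N - k0 p) (k1 p) = 2 * real N * e p" if p: "p \<in> {0..<P}" for p
  proof -
    have "0 \<le> phi0 p" "0 \<le> phi1 p" using kp p by auto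
    then have f: "freq N phi0 p = real (k0 p) / real (2 * N)" "freq N phi1 p = real (k1 p) / real (2 * N)"
      unfolding freq_def k0_def k1_def by simp_all
    show ?thesis using entropy3[of "k0 p" "k1 p" "2 * N"] k[of p] p unfolding e_def f by simp
  qed
  have Es: "real (k0 p) + real (k1 p) = 2 * real N * s p" if p: "p \<in> {0..<P}" for p
  proof -
    have "0 \<le> phi0 p" "0 \<le> phi1 p" using kp p by auto
    then show ?thesis unfolding s_def freq_def k0_def k1_def using N0 by (simp add: field_simps)
  qed
  have up: "log 2 (real (t p)) \<le> 2 * real N * e p + 2 * real N - 2 * real N * s p" if p: "p \<in> {0..<P}" for p
  proof -
    have "log 2 (real ((2 * N) choose k0 p)) \<le> En (2 * N) (k0 p)"
      using log_binom(1)[of "k0 p" "2 * N"] k[of p] p by simp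
    moreover have "log 2 (real ((2 * N - k0 p) choose k1 p)) \<le> En (2 * N - k0 p) (k1 p)"
      using log_binom(1)[of "k1 p" "2 * N - k0 p"] k[of p] p by simp
    ultimately show ?thesis unfolding Lt[OF p] using Ee[OF p] Es[OF p] by simp
  qed
  have lo: "2 * real N * e p + 2 * real N - 2 * real N * s p - 2 * log 2 (2 * real N + 1) \<le> log 2 (real (t p))"
    if p: "p \<in> {0..<P}" for p
  proof -
    have "En (2 * N) (k0 p) \<le> log 2 (2 * real N + 1) + log 2 (real ((2 * N) choose k0 p))"
      using log_binom(2)[of "k0 p" "2 * N"] k[of p] p by (simp add: add.commute)
    moreover have b2: "En (2 * N - k0 p) (k1 p) \<le> log 2 (real (2 * N - k0 p + 1)) + log 2 (real ((2 * N - k0 p) choose k1 p))"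
      using log_binom(2)[of "k1 p" "2 * N - k0 p"] k[of p] p by simp
    moreover have b3: "log 2 (real (2 * N - k0 p + 1)) \<le> log 2 (2 * real N + 1)"
      using k[of p] p by (intro log_mono) (auto simp: of_nat_diff)
    ultimately show ?thesis unfolding Lt[OF p] using Ee[OF p] Es[OF p] by linarith
  qed
  have Se: "(\<Sum>p\<in>{0..<P}. e p) = real P * H2 N P phi0 phi1"
    unfolding H2_def e_def using P0 by (simp add: lessThan_atLeast0)
  have Ss: "(\<Sum>p\<in>{0..<P}. s p) = real P * fbar N P phi0 phi1"
    unfolding fbar_def s_def using P0 by (simp add: lessThan_atLeast0)
  have "(\<Sum>p\<in>{0..<P}. log 2 (real (t p))) \<le> (\<Sum>p\<in>{0..<P}. 2 * real N * e p + 2 * real N - 2 * real N * s p)"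
    by (rule sum_mono) (rule up)
  also have "\<dots> = 2 * real N * (\<Sum>p\<in>{0..<P}. e p) + 2 * real N * real P - 2 * real N * (\<Sum>p\<in>{0..<P}. s p)"
    by (simp add: sum.distrib sum_subtractf sum_distrib_left)
  finally show "log 2 (real (card (scrA2 N P phi0 phi1))) \<le> 2 * real N * real P * (H2 N P phi0 phi1 + 1 - fbar N P phi0 phi1)"
    unfolding L Se Ss by (simp add: algebra_simps)
  have "(\<Sum>p\<in>{0..<P}. 2 * real N * e p + 2 * real N - 2 * real N * s p - 2 * log 2 (2 * real N + 1))
      \<le> (\<Sum>p\<in>{0..<P}. log 2 (real (t p)))"
    by (rule sum_mono) (rule lo)
  moreover have "(\<Sum>p\<in>{0..<P}. 2 * real N * e p + 2 * real N - 2 * real N * s p - 2 * log 2 (2 * real N + 1))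
      = 2 * real N * (\<Sum>p\<in>{0..<P}. e p) + 2 * real N * real P - 2 * real N * (\<Sum>p\<in>{0..<P}. s p)
        - 2 * real P * log 2 (2 * real N + 1)"
    by (simp add: sum.distrib sum_subtractf sum_distrib_left)
  ultimately show "2 * real N * real P * (H2 N P phi0 phi1 + 1 - fbar N P phi0 phi1) - 2 * real P * log 2 (2 * real N + 1)
          \<le> log 2 (real (card (scrA2 N P phi0 phi1)))"
    unfolding L Se Ss by (simp add: algebra_simps)
qed


lemma log_small:
  fixes N :: nat
  assumes "2 \<le> N"
  shows "log 2 (2 * real N + 1) \<le> 3 * log 2 (real N)"
proof -
  have N: "2 \<le> real N" using assms by simp
  have "2 * real N + 1 \<le> real N * real N * real N"
  proof -
    have "4 \<le> real N * real N" using N mult_mono[OF N N] by simp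
    then have "4 * real N \<le> real N * real N * real N" using N by (simp add: mult_right_mono)
    then show ?thesis using N by linarith
  qed
  then have "log 2 (2 * real N + 1) \<le> log 2 (real N ^ 3)"
    using N by (intro log_mono) (auto simp: power3_eq_cube)
  also have "\<dots> = 3 * log 2 (real N)" using N by (simp add: log_nat_power)
  finally show ?thesis .
qed

lemma core:
  fixes N P :: nat and a phi0 phi1 :: "nat \<Rightarrow> int" and \<eta> :: real
  assumes eta: "0 < \<eta>" and N2: "2 \<le> N" and P2: "2 \<le> P"
    and ha: "\<forall>n<N. \<eta> \<le> abar P a n \<and> abar P a n \<le> 1 - \<eta>"
    and hf: "\<forall>p<P. \<eta> \<le> freq N phi0 p \<and> \<eta> \<le> freq N phi1 p \<and> freq N phi0 p + freq N phi1 p \<le> 1 - \<eta>"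
    and xor: "(card (scrA1 N P a) > card (scrA2 N P phi0 phi1)) \<noteq>
       (H1 N P a - H2 N P phi0 phi1 + fbar N P phi0 phi1 > 0)"
  shows "- (3 * (log 2 (real N) / real N + log 2 (real P) / real P)) < H1 N P a - H2 N P phi0 phi1 + fbar N P phi0 phi1
    \<and> H1 N P a - H2 N P phi0 phi1 + fbar N P phi0 phi1 \<le> 3 * (log 2 (real N) / real N + log 2 (real P) / real P)"
proof -
  define D where "D = H1 N P a - H2 N P phi0 phi1 + fbar N P phi0 phi1"
  define B where "B = 3 * (log 2 (real N) / real N + log 2 (real P) / real P)"
  have Nr: "2 \<le> real N" and Pr: "2 \<le> real P" using N2 P2 by simp_all
  have ka: "\<forall>n<N. 0 < a n \<and> a n < 2 * int P"
  proof (intro allI impI)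
    fix n assume n: "n < N"
    have h: "\<eta> \<le> real_of_int (a n) / (2 * real P)" "real_of_int (a n) / (2 * real P) \<le> 1 - \<eta>"
      using ha n unfolding abar_def by auto
    have p2: "0 < 2 * real P" using Pr by simp
    have "0 < real_of_int (a n) / (2 * real P)" using h eta by linarith
    then have "0 < real_of_int (a n)" using p2 by (simp add: zero_less_divide_iff)
    moreover have "real_of_int (a n) / (2 * real P) < 1" using h eta by linarith
    then have "real_of_int (a n) < 2 * real P" using p2 by (simp add: divide_less_eq)
    ultimately show "0 < a n \<and> a n < 2 * int P" by simp
  qed
  have kp: "\<forall>p<P. 0 < phi0 p \<and> 0 < phi1 p \<and> phi0 p + phi1 p < 2 * int N"
  proof (intro allI impI)
    fix p assume p: "p < P"
    have h: "\<eta> \<le> real_of_int (phi0 p) / (2 * real N)" "\<eta> \<le> real_of_int (phi1 p) / (2 * real N)"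
      "real_of_int (phi0 p) / (2 * real N) + real_of_int (phi1 p) / (2 * real N) \<le> 1 - \<eta>"
      using hf p unfolding freq_def by auto
    have n2: "0 < 2 * real N" using Nr by simp
    have "0 < real_of_int (phi0 p) / (2 * real N)" "0 < real_of_int (phi1 p) / (2 * real N)" using h eta by linarith+
    then have "0 < real_of_int (phi0 p)" "0 < real_of_int (phi1 p)" using n2 by (simp_all add: zero_less_divide_iff)
    moreover have "(real_of_int (phi0 p) + real_of_int (phi1 p)) / (2 * real N) < 1" using h eta by (simp add: add_divide_distrib)
    then have "real_of_int (phi0 p) + real_of_int (phi1 p) < 2 * real N" using n2 by (simp add: divide_less_eq)
    ultimately show "0 < phi0 p \<and> 0 < phi1 p \<and> phi0 p + phi1 p < 2 * int N" by simp
  qed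
  have P0: "0 < P" and N0: "0 < N" using N2 P2 by simp_all
  note s1 = side1[OF ka] and s2 = side2[OF P0 N0 kp]
  define L1 where "L1 = log 2 (real (card (scrA1 N P a)))"
  define L2 where "L2 = log 2 (real (card (scrA2 N P phi0 phi1)))"
  have c1: "0 < real (card (scrA1 N P a))" and c2: "0 < real (card (scrA2 N P phi0 phi1))"
    using s1(1) s2(1) by simp_all
  have cmp: "(card (scrA1 N P a) > card (scrA2 N P phi0 phi1)) \<longleftrightarrow> L2 < L1"
    unfolding L1_def L2_def using c1 c2 by simp
  have X: "2 * real N * real P * (1 + H1 N P a) - 2 * real N * real P * (H2 N P phi0 phi1 + 1 - fbar N P phi0 phi1)
      = 2 * real P * (real N * D)" unfolding D_def by (simp add: algebra_simps)
  have lgN: "log 2 (2 * real N + 1) \<le> 3 * log 2 (real N)" using log_small[OF N2] .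
  have lgP: "log 2 (2 * real P + 1) \<le> 3 * log 2 (real P)" using log_small[OF P2] .
  have lN: "0 < log 2 (real N)" and lP: "0 < log 2 (real P)" using Nr Pr by simp_all
  have B1: "3 * log 2 (real N) / real N \<le> B" and B2: "3 * log 2 (real P) / real P \<le> B"
    unfolding B_def using lN lP Nr Pr by (simp_all add: add_divide_distrib)
  show ?thesis unfolding D_def[symmetric] B_def[symmetric]
  proof (cases "L2 < L1")
    case True
    then have D0: "\<not> 0 < D" using xor cmp unfolding D_def by simp
    have "0 < 2 * real P * (real N * D + log 2 (2 * real N + 1))"
      using True s1(2) s2(3) X unfolding L1_def L2_def by (simp add: algebra_simps)
    then have "0 < real N * D + log 2 (2 * real N + 1)" using Pr by (simp add: zero_less_mult_iff)
    then have "- (3 * log 2 (real N)) < real N * D" using lgN by linarith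
    then have "(- (3 * log 2 (real N))) / real N < (real N * D) / real N" using Nr by (intro divide_strict_right_mono) auto
    then have "- (3 * log 2 (real N) / real N) < D" using Nr by simp
    then have "- B < D" using B1 by linarith
    moreover have "0 \<le> B" using B1 lN Nr by (smt (verit) divide_pos_pos)
    ultimately show "- B < D \<and> D \<le> B" using D0 by simp
  next
    case False
    then have D0: "0 < D" using xor cmp unfolding D_def by simp
    have "2 * real P * (real N * D) \<le> real N * log 2 (2 * real P + 1)"
      using False s1(3) s2(2) X unfolding L1_def L2_def by (simp add: algebra_simps)
    then have "real N * (2 * real P * D) \<le> real N * (3 * log 2 (real P))"
      using lgP Nr by (smt (verit) mult.assoc mult.commute mult_left_mono of_nat_0_le_iff)
    then have "2 * real P * D \<le> 3 * log 2 (real P)" using Nr by simp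
    moreover have "2 * real P * D = 2 * (real P * D)" by simp
    moreover have "0 < real P * D" using Pr D0 by simp
    ultimately have "real P * D \<le> 3 * log 2 (real P)" by linarith
    then have "D \<le> 3 * log 2 (real P) / real P" using Pr by (simp add: le_divide_eq mult.commute)
    then have "D \<le> B" using B2 by simp
    moreover have "0 \<le> B" using B1 lN Nr by (smt (verit) divide_pos_pos)
    ultimately show "- B < D \<and> D \<le> B" using D0 by simp
  qed
qed

theorem mainTheorem4:
  fixes \<eta> :: real
  assumes "0 < \<eta>" and "\<eta> < 1/3"
  shows "\<exists>c>0. \<forall>(N::nat) (P::nat) (a::nat \<Rightarrow> int) (phi0::nat \<Rightarrow> int) (phi1::nat \<Rightarrow> int).
    N \<ge> 2 \<longrightarrow> P \<ge> 2 \<longrightarrow>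
    (\<forall>n<N. \<eta> \<le> abar P a n \<and> abar P a n \<le> 1 - \<eta>) \<longrightarrow>
    (\<forall>p<P. \<eta> \<le> freq N phi0 p \<and> \<eta> \<le> freq N phi1 p \<and>
           freq N phi0 p + freq N phi1 p \<le> 1 - \<eta>) \<longrightarrow>
    ((card (scrA1 N P a) > card (scrA2 N P phi0 phi1)) \<noteq>
       (H1 N P a - H2 N P phi0 phi1 + fbar N P phi0 phi1 > 0)) \<longrightarrow>
    (let D = H1 N P a - H2 N P phi0 phi1 + fbar N P phi0 phi1;
         B = c * (log 2 (real N) / real N + log 2 (real P) / real P)
     in - B < D \<and> D \<le> B)"
proof (intro exI[where x = "3::real"] conjI allI impI)
  show "(0::real) < 3" by simp
next
  fix N P :: nat and a phi0 phi1 :: "nat \<Rightarrow> int"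
  assume "N \<ge> 2" "P \<ge> 2" "\<forall>n<N. \<eta> \<le> abar P a n \<and> abar P a n \<le> 1 - \<eta>"
    "\<forall>p<P. \<eta> \<le> freq N phi0 p \<and> \<eta> \<le> freq N phi1 p \<and> freq N phi0 p + freq N phi1 p \<le> 1 - \<eta>"
    "(card (scrA1 N P a) > card (scrA2 N P phi0 phi1)) \<noteq> (H1 N P a - H2 N P phi0 phi1 + fbar N P phi0 phi1 > 0)"
  then show "let D = H1 N P a - H2 N P phi0 phi1 + fbar N P phi0 phi1;
         B = 3 * (log 2 (real N) / real N + log 2 (real P) / real P)
     in - B < D \<and> D \<le> B"
    unfolding Let_def using core[OF assms(1)] by blast
qed

end
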